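(* Let $\omega\ge 2$ and let $\Gamma$ be a finite simple graph on $n$ vertices which is $k$-regular and $\omega$-clique regular. Put $m=\frac{nk}{\omega(\omega-1)}$. Then \[p(C_\omega(\Gamma);\lambda)=(\lambda+\omega)^{m-n}\,p\!\left(\Gamma;\lambda+\omega-\frac{k}{\omega-1}\right),\] where $p(H;\lambda)=\det(\lambda I-A_H)$ denotes the characteristic polynomial of the adjacency matrix $A_H$ of a graph $H$.
   Context: A graph is $\omega$-clique regular if it has a nonempty edge set and every edge is contained in exactly one clique of order $\omega$. The $\omega$-clique graph $C_\omega(\Gamma)$ has as vertices the cliques of order $\omega$ in $\Gamma$ (there are exactly $m=\frac{nk}{\omega(\omega-1)}$ of them), two distinct ones adjacent iff they have nonempty intersection. *)

theory Defs
  imports "HOL-Combinatorics.Permutations" Complex_Main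
begin

definition simple_graph :: "'a set \<Rightarrow> ('a \<Rightarrow> 'a \<Rightarrow> bool) \<Rightarrow> bool" where
  "simple_graph V E \<longleftrightarrow> finite V \<and> (\<forall>u v. E u v \<longrightarrow> u \<in> V \<and> v \<in> V)
     \<and> (\<forall>u v. E u v \<longrightarrow> E v u) \<and> (\<forall>u. \<not> E u u)"

definition regular_graph :: "'a set \<Rightarrow> ('a \<Rightarrow> 'a \<Rightarrow> bool) \<Rightarrow> nat \<Rightarrow> bool" where
  "regular_graph V E k \<longleftrightarrow> (\<forall>v\<in>V. card {u\<in>V. E v u} = k)"

definition is_clique :: "'a set \<Rightarrow> ('a \<Rightarrow> 'a \<Rightarrow> bool) \<Rightarrow> nat \<Rightarrow> 'a set \<Rightarrow> bool" where
  "is_clique V E w S \<longleftrightarrow> S \<subseteq> V \<and> card S = w \<and> (\<forall>u\<in>S. \<forall>v\<in>S. u \<noteq> v \<longrightarrow> E u v)"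

definition clique_regular :: "'a set \<Rightarrow> ('a \<Rightarrow> 'a \<Rightarrow> bool) \<Rightarrow> nat \<Rightarrow> bool" where
  "clique_regular V E w \<longleftrightarrow> (\<exists>u v. E u v) \<and>
     (\<forall>u v. E u v \<longrightarrow> (\<exists>!S. is_clique V E w S \<and> u \<in> S \<and> v \<in> S))"

definition clique_graph_vertices :: "'a set \<Rightarrow> ('a \<Rightarrow> 'a \<Rightarrow> bool) \<Rightarrow> nat \<Rightarrow> 'a set set" where
  "clique_graph_vertices V E w = {S. is_clique V E w S}"

definition clique_graph_adj :: "'a set set \<Rightarrow> 'a set \<Rightarrow> 'a set \<Rightarrow> bool" where
  "clique_graph_adj C S T \<longleftrightarrow> S \<in> C \<and> T \<in> C \<and> S \<noteq> T \<and> S \<inter> T \<noteq> {}"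

definition det_on :: "'a set \<Rightarrow> ('a \<Rightarrow> 'a \<Rightarrow> 'b::comm_ring_1) \<Rightarrow> 'b" where
  "det_on V M = (\<Sum>p\<in>{p. p permutes V}. of_int (sign p) * (\<Prod>i\<in>V. M i (p i)))"

definition adj_matrix :: "('a \<Rightarrow> 'a \<Rightarrow> bool) \<Rightarrow> 'a \<Rightarrow> 'a \<Rightarrow> real" where
  "adj_matrix E i j = (if E i j then 1 else 0)"

definition char_poly_graph :: "'a set \<Rightarrow> ('a \<Rightarrow> 'a \<Rightarrow> bool) \<Rightarrow> real \<Rightarrow> real" where
  "char_poly_graph V E x = det_on V (\<lambda>i j. (if i = j then x else 0) - adj_matrix E i j)"

end

theory Submission
  imports Defs Jordan_Normal_Form.Determinant
begin

definition cj :: "'b set \<Rightarrow> ('b \<Rightarrow> 'a) \<Rightarrow> ('a \<Rightarrow> 'b) \<Rightarrow> ('a \<Rightarrow> 'a) \<Rightarrow> 'b \<Rightarrow> 'b" where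
  "cj A f g p = (\<lambda>x. if x \<in> A then g (p (f x)) else x)"

locale bij2 =
  fixes A :: "'b set" and B :: "'a set" and f :: "'b \<Rightarrow> 'a" and g :: "'a \<Rightarrow> 'b"
  assumes finA: "finite A" and fA: "\<And>x. x \<in> A \<Longrightarrow> f x \<in> B" and gB: "\<And>y. y \<in> B \<Longrightarrow> g y \<in> A"
    and gf: "\<And>x. x \<in> A \<Longrightarrow> g (f x) = x" and fg: "\<And>y. y \<in> B \<Longrightarrow> f (g y) = y"
begin

lemma cj_permutes: assumes "p permutes B" shows "cj A f g p permutes A"
proof (rule bij_imp_permutes)
  show "bij_betw (cj A f g p) A A"
  proof (rule bij_betw_byWitness[where f' = "cj A f g (Hilbert_Choice.inv p)"])
    show "\<forall>a\<in>A. cj A f g (Hilbert_Choice.inv p) (cj A f g p a) = a"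
      using assms fA gB gf fg by (auto simp: cj_def permutes_in_image permutes_inverses)
    show "\<forall>a\<in>A. cj A f g p (cj A f g (Hilbert_Choice.inv p) a) = a"
      using assms fA gB gf fg by (auto simp: cj_def permutes_in_image permutes_inverses permutes_inv)
    show "cj A f g p ` A \<subseteq> A" using assms fA gB by (auto simp: cj_def permutes_in_image)
    show "cj A f g (Hilbert_Choice.inv p) ` A \<subseteq> A" using assms fA gB by (auto simp: cj_def permutes_in_image permutes_inv)
  qed
qed (simp add: cj_def)

lemma finB: "finite B"
proof -
  have "B = f ` A" using fA gB fg by force
  thus ?thesis using finA by simp
qed

lemma cj_sign: assumes "p permutes B" shows "sign (cj A f g p) = sign p"
  using assms finB
proof (induction rule: permutes_induct)
  case id
  have "cj A f g (\<lambda>a. a) = (\<lambda>a. a)" using gf by (auto simp: cj_def)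
  then show ?case by (simp add: id_def)
next
  case (swap a b p)
  have eq: "cj A f g (Transposition.transpose a b \<circ> p) = Transposition.transpose (g a) (g b) \<circ> cj A f g p"
  proof
    fix x show "cj A f g (Transposition.transpose a b \<circ> p) x = (Transposition.transpose (g a) (g b) \<circ> cj A f g p) x"
    proof (cases "x \<in> A")
      case True
      then have pB: "p (f x) \<in> B" using swap fA permutes_in_image by metis
      have inj: "\<And>u v. u \<in> B \<Longrightarrow> v \<in> B \<Longrightarrow> g u = g v \<longleftrightarrow> u = v" using fg by metis
      show ?thesis using True pB swap(1,2) inj
        by (auto simp: cj_def transpose_def)
    next
      case False
      then have "x \<noteq> g a" "x \<noteq> g b" using gB swap(1,2) by auto
      then show ?thesis using False by (simp add: cj_def transpose_def)
    qed
  qed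
  have ne: "g a \<noteq> g b" using swap(1,2,3) fg by metis
  have pa: "permutation (cj A f g p)" using cj_permutes[OF swap(4)] finA permutes_imp_permutation by blast
  have "sign (Transposition.transpose (g a) (g b) \<circ> cj A f g p) = sign (Transposition.transpose (g a) (g b)) * sign (cj A f g p)"
    by (rule sign_compose[OF permutation_swap_id pa])
  moreover have "sign (Transposition.transpose a b \<circ> p) = sign (Transposition.transpose a b) * sign p"
    by (rule sign_compose[OF permutation_swap_id permutes_imp_permutation[OF finB swap(4)]])
  ultimately show ?case unfolding eq using ne swap(3,5) by (simp add: sign_swap_id del: comp_apply)
qed

end

lemma bij2_sym: "bij2 A B f g \<Longrightarrow> bij2 B A g f"
  unfolding bij2_def using bij2.finB bij2_def by blast

lemma det_on_transfer:
  assumes b: "bij2 A B f g"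
  shows "det_on B M = det_on A (\<lambda>i j. M (f i) (f j))"
proof -
  interpret b: bij2 A B f g by fact
  interpret c: bij2 B A g f using bij2_sym[OF b] .
  have bij: "bij_betw (cj B g f) {q. q permutes A} {p. p permutes B}"
  proof (rule bij_betw_byWitness[where f' = "cj A f g"])
    show "\<forall>a\<in>{q. q permutes A}. cj A f g (cj B g f a) = a"
    proof
      fix q assume q: "q \<in> {q. q permutes A}"
      show "cj A f g (cj B g f q) = q"
      proof
        fix x show "cj A f g (cj B g f q) x = q x"
          using q b.fA b.gf permutes_in_image[of q A] permutes_not_in[of q A]
          by (cases "x \<in> A") (auto simp: cj_def)
      qed
    qed
    show "\<forall>a\<in>{q. q permutes B}. cj B g f (cj A f g a) = a"
    proof
      fix q assume q: "q \<in> {q. q permutes B}"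
      show "cj B g f (cj A f g q) = q"
      proof
        fix x show "cj B g f (cj A f g q) x = q x"
          using q b.gB b.fg permutes_in_image[of q B] permutes_not_in[of q B]
          by (cases "x \<in> B") (auto simp: cj_def)
      qed
    qed
    show "cj B g f ` {q. q permutes A} \<subseteq> {p. p permutes B}" using c.cj_permutes by auto
    show "cj A f g ` {q. q permutes B} \<subseteq> {p. p permutes A}" using b.cj_permutes by auto
  qed
  have bAB: "bij_betw f A B"
    by (rule bij_betw_byWitness[where f'=g]) (use b.fA b.gB b.gf b.fg in auto)
  have "det_on B M = (\<Sum>q\<in>{q. q permutes A}. of_int (sign (cj B g f q)) * (\<Prod>i\<in>B. M i (cj B g f q i)))"
    unfolding det_on_def by (rule sum.reindex_bij_betw[OF bij, symmetric])
  also have "\<dots> = (\<Sum>q\<in>{q. q permutes A}. of_int (sign q) * (\<Prod>j\<in>A. M (f j) (f (q j))))"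
  proof (rule sum.cong[OF refl])
    fix q assume q: "q \<in> {q. q permutes A}"
    have "(\<Prod>i\<in>B. M i (cj B g f q i)) = (\<Prod>j\<in>A. M (f j) (cj B g f q (f j)))"
      by (rule prod.reindex_bij_betw[OF bAB, symmetric])
    also have "\<dots> = (\<Prod>j\<in>A. M (f j) (f (q j)))"
      using b.fA b.gf by (intro prod.cong) (auto simp: cj_def)
    finally show "of_int (sign (cj B g f q)) * (\<Prod>i\<in>B. M i (cj B g f q i)) = of_int (sign q) * (\<Prod>j\<in>A. M (f j) (f (q j)))"
      using c.cj_sign q by simp
  qed
  finally show ?thesis unfolding det_on_def .
qed

lemma det_on_nat: "det_on {0..<n} M = det (mat n n (\<lambda>(i,j). M i j))"
  unfolding det_on_def det_def by (auto intro!: sum.cong prod.cong simp: permutes_in_image)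

lemma det_on_to_mat:
  assumes "finite A"
  obtains f where "bij2 {0..<card A} A f (inv_into {0..<card A} f)"
    "\<And>M. det_on A M = det (mat (card A) (card A) (\<lambda>(i,j). M (f i) (f j)))"
proof -
  obtain f where f: "bij_betw f {0..<card A} A" using ex_bij_betw_nat_finite[OF assms] by blast
  have b: "bij2 {0..<card A} A f (inv_into {0..<card A} f)"
    unfolding bij2_def using f
    by (auto simp: bij_betw_def bij_betw_inv_into_right inv_into_f_f)
      (metis atLeastLessThan_iff inv_into_into)
  show ?thesis
    by (rule that[OF b]) (simp add: det_on_transfer[OF b] det_on_nat)
qed


lemma sylv_mat:
  fixes N :: "real mat"
  assumes N: "N \<in> carrier_mat n m" and y: "y \<noteq> 0"
  shows "det (y \<cdot>\<^sub>m 1\<^sub>m m - transpose_mat N * N) = y powi (int m - int n) * det (y \<cdot>\<^sub>m 1\<^sub>m n - N * transpose_mat N)"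
proof -
  have Nt: "transpose_mat N \<in> carrier_mat m n" using N by simp
  define M where "M = four_block_mat (y \<cdot>\<^sub>m 1\<^sub>m n) N (transpose_mat N) (1\<^sub>m m)"
  define L1 where "L1 = four_block_mat (1\<^sub>m n) (- N) (0\<^sub>m m n) (1\<^sub>m m)"
  define L2 where "L2 = four_block_mat (1\<^sub>m n) (0\<^sub>m n m) (- ((1/y) \<cdot>\<^sub>m transpose_mat N)) (1\<^sub>m m)"
  have Mc: "M \<in> carrier_mat (n+m) (n+m)" unfolding M_def using N by auto
  have L1c: "L1 \<in> carrier_mat (n+m) (n+m)" unfolding L1_def using N by auto
  have L2c: "L2 \<in> carrier_mat (n+m) (n+m)" unfolding L2_def using N by auto
  have dL1: "det L1 = 1" unfolding L1_def
    by (subst det_four_block_mat_lower_left_zero[of _ n _ m]) (use N in auto)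
  have dL2: "det L2 = 1" unfolding L2_def
    by (subst det_four_block_mat_upper_right_zero[of _ n _ m]) (use N in auto)
  have e1: "L1 * M = four_block_mat (y \<cdot>\<^sub>m 1\<^sub>m n - N * transpose_mat N) (0\<^sub>m n m) (transpose_mat N) (1\<^sub>m m)"
    unfolding L1_def M_def
    apply (subst mult_four_block_mat[of _ n n _ m _ m _ _ n _ m])
    using N Nt apply auto
    done
  have c3: "- ((1/y) \<cdot>\<^sub>m transpose_mat N * (y \<cdot>\<^sub>m 1\<^sub>m n)) + transpose_mat N = 0\<^sub>m m n"
    by (rule eq_matI) (use N y in \<open>auto simp: scalar_prod_def mult.commute[of _ "if _ then _ else _"] if_distrib cong: if_cong\<close>)
  have c4: "- ((1/y) \<cdot>\<^sub>m transpose_mat N * N) + 1\<^sub>m m = 1\<^sub>m m - (1/y) \<cdot>\<^sub>m (transpose_mat N * N)"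
    by (rule eq_matI) (use N y in \<open>auto simp: scalar_prod_def sum_distrib_left\<close>)
  have e2: "L2 * M = four_block_mat (y \<cdot>\<^sub>m 1\<^sub>m n) N (0\<^sub>m m n) (1\<^sub>m m - (1/y) \<cdot>\<^sub>m (transpose_mat N * N))"
    unfolding L2_def M_def
    apply (subst mult_four_block_mat[of _ n n _ m _ m _ _ n _ m])
    using N Nt apply (auto simp: c3 c4)
    done
  have d1: "det M = det (y \<cdot>\<^sub>m 1\<^sub>m n - N * transpose_mat N)"
  proof -
    have "det (L1 * M) = det M" using det_mult[OF L1c Mc] dL1 by simp
    moreover have "det (L1 * M) = det (y \<cdot>\<^sub>m 1\<^sub>m n - N * transpose_mat N)"
      unfolding e1 by (subst det_four_block_mat_upper_right_zero[of _ n _ m]) (use N in auto)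
    ultimately show ?thesis by simp
  qed
  have d2: "det M = y ^ n * det (1\<^sub>m m - (1/y) \<cdot>\<^sub>m (transpose_mat N * N))"
  proof -
    have "det (L2 * M) = det M" using det_mult[OF L2c Mc] dL2 by simp
    moreover have "det (L2 * M) = y ^ n * det (1\<^sub>m m - (1/y) \<cdot>\<^sub>m (transpose_mat N * N))"
      unfolding e2 by (subst det_four_block_mat_lower_left_zero[of _ n _ m]) (use N in auto)
    ultimately show ?thesis by simp
  qed
  have e3: "y \<cdot>\<^sub>m 1\<^sub>m m - transpose_mat N * N = y \<cdot>\<^sub>m (1\<^sub>m m - (1/y) \<cdot>\<^sub>m (transpose_mat N * N))"
    by (rule eq_matI) (use N y in \<open>auto simp: scalar_prod_def right_diff_distrib sum_divide_distrib[symmetric]\<close>)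
  have d3: "det (y \<cdot>\<^sub>m 1\<^sub>m m - transpose_mat N * N) = y ^ m * det (1\<^sub>m m - (1/y) \<cdot>\<^sub>m (transpose_mat N * N))"
    unfolding e3 using N by simp
  show ?thesis
  proof -
    have p: "y powi (int m - int n) * y ^ n = y ^ m"
      using y power_int_add[of y "int m - int n" "int n"] by simp
    show ?thesis using d1 d2 d3 p by (metis mult.assoc)
  qed
qed


lemma bij2_bij: "bij2 A B f g \<Longrightarrow> bij_betw f A B"
  by (rule bij_betw_byWitness[where f'=g]) (auto simp: bij2_def)

lemma sylv_sets:
  fixes N :: "'a \<Rightarrow> 'b \<Rightarrow> real"
  assumes V: "finite V" and C: "finite C" and y: "y \<noteq> 0"
  shows "det_on C (\<lambda>S T. (if S = T then y else 0) - (\<Sum>v\<in>V. N v S * N v T))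
    = y powi (int (card C) - int (card V)) * det_on V (\<lambda>u v. (if u = v then y else 0) - (\<Sum>S\<in>C. N u S * N v S))"
proof -
  obtain fV gV where bV: "bij2 {0..<card V} V fV gV"
    and dV: "\<And>M::'a\<Rightarrow>'a\<Rightarrow>real. det_on V M = det (mat (card V) (card V) (\<lambda>(i,j). M (fV i) (fV j)))"
    using det_on_to_mat[OF V] by metis
  obtain fC gC where bC: "bij2 {0..<card C} C fC gC"
    and dC: "\<And>M::'b\<Rightarrow>'b\<Rightarrow>real. det_on C M = det (mat (card C) (card C) (\<lambda>(i,j). M (fC i) (fC j)))"
    using det_on_to_mat[OF C] by metis
  define n where "n = card V"
  define m where "m = card C"
  define Nm where "Nm = mat n m (\<lambda>(i,j). N (fV i) (fC j))"
  have Nc: "Nm \<in> carrier_mat n m" unfolding Nm_def by simp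
  have injV: "\<And>i j. i < n \<Longrightarrow> j < n \<Longrightarrow> fV i = fV j \<longleftrightarrow> i = j"
    using bV unfolding bij2_def n_def by (metis atLeastLessThan_iff zero_le)
  have injC: "\<And>i j. i < m \<Longrightarrow> j < m \<Longrightarrow> fC i = fC j \<longleftrightarrow> i = j"
    using bC unfolding bij2_def m_def by (metis atLeastLessThan_iff zero_le)
  have sV: "\<And>h. (\<Sum>v\<in>V. h v) = (\<Sum>k = 0..<n. h (fV k))"
    using sum.reindex_bij_betw[OF bij2_bij[OF bV]] unfolding n_def by metis
  have sC: "\<And>h. (\<Sum>S\<in>C. h S) = (\<Sum>k = 0..<m. h (fC k))"
    using sum.reindex_bij_betw[OF bij2_bij[OF bC]] unfolding m_def by metis
  have m1: "mat m m (\<lambda>(i,j). (if fC i = fC j then y else 0) - (\<Sum>v\<in>V. N v (fC i) * N v (fC j)))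
     = y \<cdot>\<^sub>m 1\<^sub>m m - transpose_mat Nm * Nm"
    by (rule eq_matI) (auto simp: Nm_def injC sV scalar_prod_def)
  have m2: "mat n n (\<lambda>(i,j). (if fV i = fV j then y else 0) - (\<Sum>S\<in>C. N (fV i) S * N (fV j) S))
     = y \<cdot>\<^sub>m 1\<^sub>m n - Nm * transpose_mat Nm"
    by (rule eq_matI) (auto simp: Nm_def injV sC scalar_prod_def)
  show ?thesis
    using dV[of "\<lambda>u v. (if u = v then y else 0) - (\<Sum>S\<in>C. N u S * N v S)"]
      dC[of "\<lambda>S T. (if S = T then y else 0) - (\<Sum>v\<in>V. N v S * N v T)"]
      m1 m2 sylv_mat[OF Nc y] unfolding m_def n_def
    by (simp add: case_prod_unfold)
qed


lemma det_on_cong: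
  assumes "\<And>i j. i \<in> A \<Longrightarrow> j \<in> A \<Longrightarrow> M i j = M' i j"
  shows "det_on A M = det_on A M'"
  unfolding det_on_def
  by (intro sum.cong refl arg_cong2[where f="(*)"] prod.cong) (auto intro!: assms simp: permutes_in_image)

theorem theorem8:
  fixes V :: "'a set" and E :: "'a \<Rightarrow> 'a \<Rightarrow> bool" and w k n m :: nat
  assumes "w \<ge> 2"
    and "simple_graph V E"
    and "card V = n"
    and "regular_graph V E k"
    and "clique_regular V E w"
    and "m = (n * k) div (w * (w - 1))"
  shows "\<forall>x::real. x \<noteq> - real w \<longrightarrow>
    char_poly_graph (clique_graph_vertices V E w) (clique_graph_adj (clique_graph_vertices V E w)) x
    = (x + real w) powi (int m - int n) *
      char_poly_graph V E (x + real w - real k / (real w - 1))"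
proof (intro allI impI)
  fix x :: real assume x: "x \<noteq> - real w"
  note w = assms(1)
  have finV: "finite V" and EV: "\<And>u v. E u v \<Longrightarrow> u \<in> V \<and> v \<in> V"
    and Esym: "\<And>u v. E u v \<Longrightarrow> E v u" and Eirr: "\<And>u. \<not> E u u"
    using assms(2) unfolding simple_graph_def by auto
  have deg: "\<And>v. v \<in> V \<Longrightarrow> card {u\<in>V. E v u} = k" using assms(4) unfolding regular_graph_def by auto
  have uniq: "\<And>u v. E u v \<Longrightarrow> \<exists>!S. is_clique V E w S \<and> u \<in> S \<and> v \<in> S"
    using assms(5) unfolding clique_regular_def by auto
  define C where "C = clique_graph_vertices V E w"
  have Cdef: "\<And>S. S \<in> C \<longleftrightarrow> S \<subseteq> V \<and> card S = w \<and> (\<forall>u\<in>S. \<forall>v\<in>S. u \<noteq> v \<longrightarrow> E u v)"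
    unfolding C_def clique_graph_vertices_def is_clique_def by auto
  have CV: "\<And>S. S \<in> C \<Longrightarrow> S \<subseteq> V" using Cdef by simp
  have Ccard: "\<And>S. S \<in> C \<Longrightarrow> card S = w" using Cdef by simp
  have Cadj: "\<And>S u v. S \<in> C \<Longrightarrow> u \<in> S \<Longrightarrow> v \<in> S \<Longrightarrow> u \<noteq> v \<Longrightarrow> E u v" using Cdef by simp
  have CI: "\<And>S. is_clique V E w S \<Longrightarrow> S \<in> C" unfolding C_def clique_graph_vertices_def by simp
  have finC: "finite C"
  proof -
    have "C \<subseteq> Pow V" using CV by auto
    thus ?thesis using finV finite_subset by auto
  qed
  have finS: "\<And>S. S \<in> C \<Longrightarrow> finite S" using CV finV by (meson rev_finite_subset)
  have two: "\<And>S T u v. S \<in> C \<Longrightarrow> T \<in> C \<Longrightarrow> u \<in> S \<Longrightarrow> u \<in> T \<Longrightarrow> v \<in> S \<Longrightarrow> v \<in> T \<Longrightarrow> u \<noteq> v \<Longrightarrow> S = T"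
  proof -
    fix S T u v assume h: "S \<in> C" "T \<in> C" "u \<in> S" "u \<in> T" "v \<in> S" "v \<in> T" "u \<noteq> v"
    have "E u v" using h Cadj by auto
    from uniq[OF this] show "S = T" using h unfolding C_def clique_graph_vertices_def by auto
  qed
  have int_le: "\<And>S T. S \<in> C \<Longrightarrow> T \<in> C \<Longrightarrow> S \<noteq> T \<Longrightarrow> card (S \<inter> T) = (if S \<inter> T = {} then 0 else 1)"
  proof -
    fix S T assume h: "S \<in> C" "T \<in> C" "S \<noteq> T"
    show "card (S \<inter> T) = (if S \<inter> T = {} then 0 else 1)"
    proof (cases "S \<inter> T = {}")
      case False
      then obtain u where u: "u \<in> S \<inter> T" by auto
      have "S \<inter> T = {u}" using two[OF h(1,2)] h(3) u by blast
      then show ?thesis by simp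
    qed simp
  qed
  have pair: "\<And>u v. u \<in> V \<Longrightarrow> v \<in> V \<Longrightarrow> u \<noteq> v \<Longrightarrow> card {S\<in>C. u \<in> S \<and> v \<in> S} = (if E u v then 1 else 0)"
  proof -
    fix u v assume h: "u \<in> V" "v \<in> V" "u \<noteq> v"
    show "card {S\<in>C. u \<in> S \<and> v \<in> S} = (if E u v then 1 else 0)"
    proof (cases "E u v")
      case True
      obtain S where S: "is_clique V E w S" "u \<in> S" "v \<in> S" using uniq[OF True] by blast
      have SC: "S \<in> C" using S unfolding C_def clique_graph_vertices_def by auto
      have "{S\<in>C. u \<in> S \<and> v \<in> S} = {S}" using two[OF SC] S SC h(3) by blast
      then show ?thesis using True by simp
    next
      case False
      have e: "{S\<in>C. u \<in> S \<and> v \<in> S} = {}" using False Cadj h(3) by blast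
      show ?thesis using False by (subst e) simp
    qed
  qed
  define r where "r = (\<lambda>v. card {S\<in>C. v \<in> S})"
  have rk: "\<And>v. v \<in> V \<Longrightarrow> r v * (w - 1) = k"
  proof -
    fix v assume v: "v \<in> V"
    define Cv where "Cv = {S\<in>C. v \<in> S}"
    have finCv: "finite Cv" unfolding Cv_def using finC by simp
    have un: "{u\<in>V. E v u} = (\<Union>S\<in>Cv. S - {v})"
    proof
      show "{u\<in>V. E v u} \<subseteq> (\<Union>S\<in>Cv. S - {v})"
      proof
        fix u assume "u \<in> {u\<in>V. E v u}"
        then have "E v u" by simp
        then obtain S where S: "is_clique V E w S" "v \<in> S" "u \<in> S" using uniq by blast
        have "S \<in> Cv" using S unfolding Cv_def C_def clique_graph_vertices_def by auto
        moreover have "u \<noteq> v" using \<open>E v u\<close> Eirr by auto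
        ultimately show "u \<in> (\<Union>S\<in>Cv. S - {v})" using S by auto
      qed
      show "(\<Union>S\<in>Cv. S - {v}) \<subseteq> {u\<in>V. E v u}" using CV Cadj unfolding Cv_def by blast
    qed
    have "card (\<Union>S\<in>Cv. S - {v}) = (\<Sum>S\<in>Cv. card (S - {v}))"
      apply (rule card_UN_disjoint[OF finCv])
      using finS apply (auto simp: Cv_def)
      using two by metis+
    also have "\<dots> = (\<Sum>S\<in>Cv. w - 1)"
      by (rule sum.cong) (auto simp: Cv_def Ccard finS)
    finally have "k = card Cv * (w - 1)" using deg[OF v] un by simp
    then show "r v * (w - 1) = k" unfolding r_def Cv_def by simp
  qed
  have rreal: "\<And>v. v \<in> V \<Longrightarrow> real (r v) = real k / (real w - 1)"
  proof -
    fix v assume v: "v \<in> V"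
    have "real (r v) * (real w - 1) = real k" using rk[OF v] w by (metis of_nat_1 of_nat_diff of_nat_mult one_le_numeral order_trans)
    moreover have "real w - 1 \<noteq> 0" using w by simp
    ultimately show "real (r v) = real k / (real w - 1)" by (simp add: field_simps)
  qed
  have cardC: "card C = m"
  proof -
    have "(\<Sum>v\<in>V. r v) = (\<Sum>v\<in>V. \<Sum>S\<in>C. of_bool (v \<in> S) :: nat)"
      unfolding r_def using finC by (auto intro!: sum.cong simp: Int_def conj_commute)
    also have "\<dots> = (\<Sum>S\<in>C. \<Sum>v\<in>V. of_bool (v \<in> S))" by (rule sum.swap)
    also have "\<dots> = (\<Sum>S\<in>C. w)"
      using finV CV Ccard by (intro sum.cong refl) (simp add: Int_absorb1 Int_def[symmetric])
    finally have e: "(\<Sum>v\<in>V. r v) = card C * w" by simp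
    have "(\<Sum>v\<in>V. r v * (w - 1)) = n * k" using rk assms(3) by simp
    then have "n * k = card C * w * (w - 1)" using e by (simp add: sum_distrib_right[symmetric])
    then show ?thesis using assms(6) w by simp
  qed
  define N where "N = (\<lambda>(v::'a) (S::'a set). if v \<in> S then 1 else (0::real))"
  define y where "y = x + real w"
  have y: "y \<noteq> 0" using x unfolding y_def by linarith
  have L: "char_poly_graph C (clique_graph_adj C) x
     = det_on C (\<lambda>S T. (if S = T then y else 0) - (\<Sum>v\<in>V. N v S * N v T))"
    unfolding char_poly_graph_def
  proof (rule det_on_cong)
    fix S T assume h: "S \<in> C" "T \<in> C"
    have s: "(\<Sum>v\<in>V. N v S * N v T) = real (card (S \<inter> T))"
    proof -
      have "(\<Sum>v\<in>V. N v S * N v T) = (\<Sum>v\<in>V. of_bool (v \<in> S \<inter> T))"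
        unfolding N_def by (intro sum.cong) auto
      also have "\<dots> = real (card (V \<inter> {v. v \<in> S \<inter> T}))" using finV by simp
      also have "V \<inter> {v. v \<in> S \<inter> T} = S \<inter> T" using h CV by auto
      finally show ?thesis .
    qed
    show "(if S = T then x else 0) - adj_matrix (clique_graph_adj C) S T
        = (if S = T then y else 0) - (\<Sum>v\<in>V. N v S * N v T)"
      unfolding s using h int_le[OF h] Ccard
      by (auto simp: adj_matrix_def clique_graph_adj_def y_def)
  qed
  have R: "char_poly_graph V E (x + real w - real k / (real w - 1))
     = det_on V (\<lambda>u v. (if u = v then y else 0) - (\<Sum>S\<in>C. N u S * N v S))"
    unfolding char_poly_graph_def
  proof (rule det_on_cong)
    fix u v assume h: "u \<in> V" "v \<in> V"
    have s: "(\<Sum>S\<in>C. N u S * N v S) = real (card {S\<in>C. u \<in> S \<and> v \<in> S})"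
    proof -
      have "(\<Sum>S\<in>C. N u S * N v S) = (\<Sum>S\<in>C. of_bool (u \<in> S \<and> v \<in> S))"
        unfolding N_def by (intro sum.cong) auto
      also have "\<dots> = real (card (C \<inter> {S. u \<in> S \<and> v \<in> S}))" using finC by simp
      also have "C \<inter> {S. u \<in> S \<and> v \<in> S} = {S\<in>C. u \<in> S \<and> v \<in> S}" by auto
      finally show ?thesis .
    qed
    show "(if u = v then x + real w - real k / (real w - 1) else 0) - adj_matrix E u v
        = (if u = v then y else 0) - (\<Sum>S\<in>C. N u S * N v S)"
    proof (cases "u = v")
      case True
      then show ?thesis unfolding s using rreal[OF h(1)] Eirr
        by (simp add: adj_matrix_def y_def r_def)
    next
      case False
      then show ?thesis unfolding s using pair[OF h False]
        by (simp add: adj_matrix_def)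
    qed
  qed
  show "char_poly_graph (clique_graph_vertices V E w) (clique_graph_adj (clique_graph_vertices V E w)) x
    = (x + real w) powi (int m - int n) *
      char_poly_graph V E (x + real w - real k / (real w - 1))"
    unfolding C_def[symmetric] L R sylv_sets[OF finV finC y] cardC assms(3) by (simp add: y_def)
qed

end
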